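(* Let $\sigma$ be a term ordering on $\mathbb{T}^n$. Let $T=(t_1,\dots,t_r)$ be an interreduced $\sigma$-ordered tuple of elements of $\mathbb{T}^n$, and let $T'$ be a set of elements of $\mathbb{T}^n$. Assume there exist $t'\in T'$ and an index $k\in\{1,\dots,r\}$ such that $t_1,\dots,t_{k-1}\in T'$, $t_k>_\sigma t'$, and $t'$ is not divisible by any $t_i$ in $T$. Then $O_\sigma(T')\prec_\sigma T$, and $T$ is not a proper prefix of $O_\sigma(T')$.
   Context: $\mathbb{T}^n$ is the monoid of power-products in $x_1,\dots,x_n$. A tuple $(t_1,\dots,t_r)$ of distinct power-products is $\sigma$-ordered if $t_1<_\sigma\cdots<_\sigma t_r$. The interreduction of a set $S$ of power-products is the set of elements of $S$ not divisible by any other element of $S$; $S$ (or a tuple) is interreduced if it equals its interreduction. For a set $T'$ of power-products, $O_\sigma(T')$ is the $\sigma$-ordered tuple of the interreduction of $T'$. For $\sigma$-ordered tuples $T=(t_1,\dots,t_r)$ and $T'=(t'_1,\dots,t'_{r'})$, $T'\prec_\sigma T$ means either $T$ is a proper prefix of $T'$ (i.e. $r<r'$ and $t_i=t'_i$ for $i\le r$), or there is $k\le\min(r,r')$ with $t_i=t'_i$ for $i<k$ and $t'_k<_\sigma t_k$. *)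

theory Defs
  imports Main
begin

text \<open>Power-products in the variables indexed by a finite type 'v (so n = CARD('v)):
  a power-product is its exponent vector 'v \<Rightarrow> nat.\<close>

type_synonym 'v pp = "'v \<Rightarrow> nat"

definition pp_one :: "'v pp" where "pp_one = (\<lambda>_. 0)"

definition pp_mult :: "'v pp \<Rightarrow> 'v pp \<Rightarrow> 'v pp" where
  "pp_mult s t = (\<lambda>i. s i + t i)"

definition pp_dvd :: "'v pp \<Rightarrow> 'v pp \<Rightarrow> bool" where
  "pp_dvd s t \<longleftrightarrow> (\<exists>u. t = pp_mult s u)"

definition term_ordering :: "('v pp \<Rightarrow> 'v pp \<Rightarrow> bool) \<Rightarrow> bool" where
  "term_ordering le \<longleftrightarrow>
     (\<forall>t. le t t) \<and>
     (\<forall>s t. le s t \<and> le t s \<longrightarrow> s = t) \<and>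
     (\<forall>s t u. le s t \<and> le t u \<longrightarrow> le s u) \<and>
     (\<forall>s t. le s t \<or> le t s) \<and>
     (\<forall>t. le pp_one t) \<and>
     (\<forall>s t u. le s t \<longrightarrow> le (pp_mult s u) (pp_mult t u))"

definition strict :: "('v pp \<Rightarrow> 'v pp \<Rightarrow> bool) \<Rightarrow> 'v pp \<Rightarrow> 'v pp \<Rightarrow> bool" where
  "strict le s t \<longleftrightarrow> le s t \<and> s \<noteq> t"

definition sigma_ordered :: "('v pp \<Rightarrow> 'v pp \<Rightarrow> bool) \<Rightarrow> 'v pp list \<Rightarrow> bool" where
  "sigma_ordered le T \<longleftrightarrow> sorted_wrt (strict le) T"

definition interreduction :: "'v pp set \<Rightarrow> 'v pp set" where
  "interreduction S = {t \<in> S. \<forall>s\<in>S. s \<noteq> t \<longrightarrow> \<not> pp_dvd s t}"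

definition interreduced_tuple :: "'v pp list \<Rightarrow> bool" where
  "interreduced_tuple T \<longleftrightarrow> interreduction (set T) = set T"

definition O_sigma :: "('v pp \<Rightarrow> 'v pp \<Rightarrow> bool) \<Rightarrow> 'v pp set \<Rightarrow> 'v pp list" where
  "O_sigma le T' = (THE L. sigma_ordered le L \<and> set L = interreduction T')"

definition proper_prefix :: "'a list \<Rightarrow> 'a list \<Rightarrow> bool" where
  "proper_prefix T T' \<longleftrightarrow> length T < length T' \<and> (\<forall>i<length T. T ! i = T' ! i)"

text \<open>tuple_prec le T' T  is  T' \<prec>_sigma T  (indices 0-based).\<close>

definition tuple_prec :: "('v pp \<Rightarrow> 'v pp \<Rightarrow> bool) \<Rightarrow> 'v pp list \<Rightarrow> 'v pp list \<Rightarrow> bool" where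
  "tuple_prec le T' T \<longleftrightarrow>
     proper_prefix T T' \<or>
     (\<exists>k < min (length T) (length T').
        (\<forall>i<k. T ! i = T' ! i) \<and> strict le (T' ! k) (T ! k))"

end

theory Submission
  imports Defs Complex_Main
begin

lemma nat_seq_incsub:
  fixes s :: "nat \<Rightarrow> nat"
  shows "\<exists>r. strict_mono r \<and> incseq (\<lambda>n. s (r n))"
proof -
  obtain r where r: "strict_mono r" and m: "monoseq (\<lambda>n. s (r n))"
    using seq_monosub by blast
  show ?thesis
  proof (cases "incseq (\<lambda>n. s (r n))")
    case True then show ?thesis using r by blast
  next
    case False
    then have d: "decseq (\<lambda>n. s (r n))" using m by (simp add: monoseq_iff)
    obtain n0 where n0: "\<forall>y. s (r n0) \<le> s (r y)"
      using ex_has_least_nat[of "\<lambda>_. True" 0 "\<lambda>n. s (r n)"] by blast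
    have c: "s (r (n + n0)) = s (r n0)" for n
      using d n0 by (metis decseqD le_add2 le_antisym)
    have "strict_mono (\<lambda>n. r (n + n0))" using r by (simp add: strict_mono_def)
    moreover have "incseq (\<lambda>n. s (r (n + n0)))" using c by (simp add: incseq_def)
    ultimately show ?thesis by blast
  qed
qed

lemma dickson_aux:
  fixes s :: "nat \<Rightarrow> 'v \<Rightarrow> nat"
  assumes "finite V"
  shows "\<exists>r. strict_mono r \<and> (\<forall>v\<in>V. incseq (\<lambda>n. s (r n) v))"
  using assms
proof (induction V rule: finite_induct)
  case empty
  then show ?case by (rule exI[of _ id]) (simp add: strict_mono_def)
next
  case (insert x V)
  then obtain r where r: "strict_mono r" "\<forall>v\<in>V. incseq (\<lambda>n. s (r n) v)" by blast
  obtain q where q: "strict_mono q" "incseq (\<lambda>n. s (r (q n)) x)"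
    using nat_seq_incsub[of "\<lambda>n. s (r n) x"] by blast
  have "strict_mono (r \<circ> q)" using r q by (simp add: strict_mono_def)
  moreover have "\<forall>v\<in>insert x V. incseq (\<lambda>n. s ((r \<circ> q) n) v)"
  proof
    fix v assume "v \<in> insert x V"
    then show "incseq (\<lambda>n. s ((r \<circ> q) n) v)"
    proof
      assume "v = x" then show ?thesis using q by simp
    next
      assume "v \<in> V"
      then have "incseq (\<lambda>n. s (r n) v)" using r by blast
      then show ?thesis using q(1) unfolding incseq_def
        by (simp add: strict_mono_less_eq)
    qed
  qed
  ultimately show ?case by blast
qed

lemma dickson:
  fixes s :: "nat \<Rightarrow> ('v::finite) \<Rightarrow> nat"
  shows "\<exists>i j. i < j \<and> (\<forall>v. s i v \<le> s j v)"
proof -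
  obtain r where r: "strict_mono r" "\<forall>v\<in>UNIV. incseq (\<lambda>n. s (r n) v)"
    using dickson_aux[of "UNIV :: 'v set" s] by auto
  have "r 0 < r 1" using r(1) by (simp add: strict_mono_def)
  moreover have "\<forall>v. s (r 0) v \<le> s (r 1) v" using r(2) by (simp add: incseq_def)
  ultimately show ?thesis by blast
qed

lemma finite_interreduction:
  fixes S :: "('v::finite) pp set"
  shows "finite (interreduction S)"
proof (rule ccontr)
  assume "infinite (interreduction S)"
  then obtain f :: "nat \<Rightarrow> 'v pp" where f: "inj f" "range f \<subseteq> interreduction S"
    using infinite_countable_subset[of "interreduction S"] by blast
  obtain i j where ij: "i < j" "\<forall>v. f i v \<le> f j v" using dickson[of f] by blast
  have ne: "f i \<noteq> f j" using f(1) ij(1) by (metis inj_eq less_irrefl)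
  have "pp_dvd (f i) (f j)"
    unfolding pp_dvd_def pp_mult_def
    by (rule exI[of _ "\<lambda>x. f j x - f i x"]) (use ij(2) in auto)
  moreover have "f j \<in> interreduction S" "f i \<in> S" using f(2) by (auto simp: interreduction_def)
  ultimately show False using ne by (auto simp: interreduction_def)
qed

definition deg :: "('v::finite) pp \<Rightarrow> nat" where "deg t = sum t UNIV"

lemma pp_dvd_trans: "pp_dvd a b \<Longrightarrow> pp_dvd b c \<Longrightarrow> pp_dvd a c"
proof -
  assume "pp_dvd a b" "pp_dvd b c"
  then obtain u w where "b = pp_mult a u" "c = pp_mult b w" unfolding pp_dvd_def by blast
  then have "c = pp_mult a (pp_mult u w)" by (simp add: pp_mult_def add.assoc)
  then show ?thesis unfolding pp_dvd_def by blast
qed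

lemma pp_dvd_deg:
  assumes "pp_dvd s t" "s \<noteq> t"
  shows "deg s < deg (t::('v::finite) pp)"
proof -
  obtain u where u: "t = pp_mult s u" using assms(1) pp_dvd_def by blast
  have "u \<noteq> (\<lambda>_. 0)"
  proof
    assume "u = (\<lambda>_. 0)"
    then have "t = s" using u by (simp add: pp_mult_def)
    with assms(2) show False by simp
  qed
  then obtain x where x: "u x \<noteq> 0" by blast
  have "u x \<le> sum u UNIV" by (rule member_le_sum) auto
  then have "0 < sum u UNIV" using x by simp
  moreover have "deg t = deg s + sum u UNIV"
    using u by (simp add: deg_def pp_mult_def sum.distrib)
  ultimately show ?thesis by simp
qed

lemma interreduction_below:
  fixes S :: "('v::finite) pp set"
  assumes "t \<in> S"
  shows "\<exists>v\<in>interreduction S. pp_dvd v t"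
proof -
  have "pp_dvd t t" unfolding pp_dvd_def pp_mult_def by (rule exI[of _ "\<lambda>_. 0"]) simp
  then obtain v where v: "v \<in> S \<and> pp_dvd v t" "\<forall>y. y \<in> S \<and> pp_dvd y t \<longrightarrow> deg v \<le> deg y"
    using ex_has_least_nat[of "\<lambda>v. v \<in> S \<and> pp_dvd v t" t deg] assms by blast
  have "v \<in> interreduction S"
    unfolding interreduction_def
  proof (safe)
    show "v \<in> S" using v by blast
  next
    fix s assume "s \<in> S" "s \<noteq> v" "pp_dvd s v"
    then have "pp_dvd s t" "deg s < deg v" using v pp_dvd_trans pp_dvd_deg by blast+
    then show False using v \<open>s \<in> S\<close> by force
  qed
  then show ?thesis using v by blast
qed

lemma sorted_unique:
  assumes "\<And>x. \<not> R x x" "\<And>x y. R x y \<Longrightarrow> \<not> R y x"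
  shows "sorted_wrt R xs \<Longrightarrow> sorted_wrt R ys \<Longrightarrow> set xs = set ys \<Longrightarrow> xs = ys"
proof (induction xs arbitrary: ys)
  case Nil then show ?case by simp
next
  case (Cons x xs)
  then obtain y ys' where ys: "ys = y # ys'" by (cases ys) auto
  have xn: "x \<notin> set xs" using Cons.prems(1) assms(1) by auto
  have yn: "y \<notin> set ys'" using Cons.prems(2) ys assms(1) by auto
  have "x = y"
  proof (rule ccontr)
    assume "x \<noteq> y"
    then have "x \<in> set ys'" "y \<in> set xs" using Cons.prems(3) ys by auto
    then have "R y x" "R x y" using Cons.prems(1,2) ys by auto
    then show False using assms(2) by blast
  qed
  moreover have "set xs = set ys'" using Cons.prems(3) ys xn yn \<open>x = y\<close> by auto
  ultimately show ?case using Cons ys by simp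
qed

lemma sorted_exists:
  assumes to: "term_ordering le" and fin: "finite (F :: ('v::finite) pp set)"
  shows "\<exists>L. sorted_wrt (strict le) L \<and> set L = F"
  using fin
proof (induction F rule: finite_induct)
  case empty then show ?case by auto
next
  case (insert x F)
  then obtain L where L: "sorted_wrt (strict le) L" "set L = F" by blast
  define L' where "L' = filter (\<lambda>y. strict le y x) L @ [x] @ filter (\<lambda>y. strict le x y) L"
  have tr: "\<And>a b c. strict le a b \<Longrightarrow> strict le b c \<Longrightarrow> strict le a c"
    using to unfolding term_ordering_def strict_def by metis
  have "sorted_wrt (strict le) L'"
    unfolding L'_def using L(1)
    by (auto simp: sorted_wrt_append sorted_wrt_filter intro: tr)
  moreover have "set L' = insert x F"
  proof -
    have "\<And>y. y \<in> F \<Longrightarrow> strict le y x \<or> strict le x y"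
      using to insert(2) unfolding term_ordering_def strict_def by metis
    then show ?thesis unfolding L'_def using L(2) by auto
  qed
  ultimately show ?case by blast
qed

lemma O_sigma_props:
  assumes to: "term_ordering le"
  shows "sigma_ordered le (O_sigma le (S :: ('v::finite) pp set)) \<and>
         set (O_sigma le S) = interreduction S"
proof -
  obtain L where L: "sorted_wrt (strict le) L" "set L = interreduction S"
    using sorted_exists[OF to finite_interreduction] by blast
  have irr: "\<And>x. \<not> strict le x x" by (simp add: strict_def)
  have asy: "\<And>x y. strict le x y \<Longrightarrow> \<not> strict le y x"
    using to unfolding term_ordering_def strict_def by metis
  show ?thesis unfolding O_sigma_def
    apply (rule theI[of _ L])
    using L apply (simp add: sigma_ordered_def)
    using L sorted_unique[of "strict le", OF irr asy] by (simp add: sigma_ordered_def)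
qed

lemma dvd_le:
  assumes to: "term_ordering le" and d: "pp_dvd v t"
  shows "le v t"
proof -
  obtain w where w: "t = pp_mult v w" using d pp_dvd_def by blast
  have "le pp_one w" using to term_ordering_def by blast
  then have "le (pp_mult pp_one v) (pp_mult w v)" using to term_ordering_def by blast
  moreover have "pp_mult pp_one v = v" by (simp add: pp_mult_def pp_one_def)
  moreover have "pp_mult w v = t" using w by (simp add: pp_mult_def add.commute)
  ultimately show ?thesis by simp
qed

theorem lemma4p10:
  fixes le :: "('v::finite) pp \<Rightarrow> 'v pp \<Rightarrow> bool"
    and T :: "'v pp list" and T' :: "'v pp set"
  assumes "term_ordering le"
    and "sigma_ordered le T"
    and "interreduced_tuple T"
    and "\<exists>t'\<in>T'. \<exists>k<length T. (\<forall>i<k. T ! i \<in> T') \<and> strict le t' (T ! k)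
            \<and> (\<forall>i<length T. \<not> pp_dvd (T ! i) t')"
  shows "tuple_prec le (O_sigma le T') T \<and> \<not> proper_prefix T (O_sigma le T')"
proof -
  note to = assms(1)
  obtain t' k where t': "t' \<in> T'" "k < length T" "\<forall>i<k. T ! i \<in> T'"
    "strict le t' (T ! k)" "\<forall>i<length T. \<not> pp_dvd (T ! i) t'"
    using assms(4) by blast
  define L where "L = O_sigma le T'"
  have Ls: "sorted_wrt (strict le) L" and Lset: "set L = interreduction T'"
    using O_sigma_props[OF to, of T'] unfolding L_def sigma_ordered_def by auto
  have irr: "\<And>x. \<not> strict le x x" by (simp add: strict_def)
  have asy: "\<And>x y. strict le x y \<Longrightarrow> \<not> strict le y x"
    using to unfolding term_ordering_def strict_def by metis
  have lstr: "\<And>a b c. le a b \<Longrightarrow> strict le b c \<Longrightarrow> strict le a c"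
    using to unfolding term_ordering_def strict_def by metis
  have ltr: "\<And>a b c. le a b \<Longrightarrow> le b c \<Longrightarrow> le a c"
    using to unfolding term_ordering_def by metis
  have lrefl: "\<And>a. le a a"
    using to unfolding term_ordering_def by metis
  have Lnth: "\<And>i j. i < j \<Longrightarrow> j < length L \<Longrightarrow> strict le (L ! i) (L ! j)"
    using Ls by (simp add: sorted_wrt_iff_nth_less)
  have Lle: "\<And>i j. i \<le> j \<Longrightarrow> j < length L \<Longrightarrow> le (L ! i) (L ! j)"
    using Lnth lrefl by (metis le_neq_implies_less strict_def)
  have Tnth: "\<And>i j. i < j \<Longrightarrow> j < length T \<Longrightarrow> strict le (T ! i) (T ! j)"
    using assms(2) by (simp add: sorted_wrt_iff_nth_less sigma_ordered_def)
  have Tdist: "\<And>i j. i < length T \<Longrightarrow> j < length T \<Longrightarrow> i \<noteq> j \<Longrightarrow> T ! i \<noteq> T ! j"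
    using Tnth irr by (metis linorder_neqE_nat)
  have Tnodvd: "\<And>i j. i < length T \<Longrightarrow> j < length T \<Longrightarrow> i \<noteq> j \<Longrightarrow> \<not> pp_dvd (T ! i) (T ! j)"
  proof -
    fix i j assume h: "i < length T" "j < length T" "i \<noteq> j"
    have "T ! j \<in> interreduction (set T)" using assms(3) h(2)
      by (simp add: interreduced_tuple_def)
    then show "\<not> pp_dvd (T ! i) (T ! j)" using h Tdist[OF h]
      unfolding interreduction_def by auto
  qed
  obtain u where u: "u \<in> interreduction T'" "pp_dvd u t'"
    using interreduction_below[OF t'(1)] by blast
  have ulk: "strict le u (T ! k)" using lstr[OF dvd_le[OF to u(2)] t'(4)] .
  have unT: "\<And>i. i < length T \<Longrightarrow> u \<noteq> T ! i" using t'(5) u(2) by metis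
  obtain ju where ju: "ju < length L" "L ! ju = u" using u(1) Lset by (metis in_set_conv_nth)
  define P where "P i \<longleftrightarrow> i \<ge> length L \<or> L ! i \<noteq> T ! i" for i
  have ex: "\<exists>i\<le>k. P i"
  proof (rule ccontr)
    assume "\<not> (\<exists>i\<le>k. P i)"
    then have c: "\<And>i. i \<le> k \<Longrightarrow> i < length L \<and> L ! i = T ! i" by (auto simp: P_def)
    show False
    proof (cases "ju \<le> k")
      case True
      then have "L ! ju = T ! ju" "ju < length T" using c[OF True] t'(2) by auto
      then show False using ju unT by metis
    next
      case False
      then have "k < ju" by simp
      then have "strict le (L ! k) (L ! ju)" using Lnth ju(1) by blast
      then show False using c[of k] ju ulk asy by auto
    qed
  qed
  define m where "m = (LEAST i. P i)"
  obtain i0 where i0: "i0 \<le> k" "P i0" using ex by blast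
  have "m \<le> i0" unfolding m_def by (rule Least_le) (rule i0(2))
  then have mk: "m \<le> k" using i0(1) by simp
  have Pm: "P m" unfolding m_def by (rule LeastI) (rule i0(2))
  have before: "i < length L \<and> L ! i = T ! i" if "i < m" for i
  proof -
    have "\<not> P i" using that unfolding m_def by (rule not_less_Least)
    then show ?thesis by (simp add: P_def)
  qed
  have mT: "m < length T" using mk t'(2) by simp
  have mL: "m < length L"
  proof (rule ccontr)
    assume "\<not> m < length L"
    then have "ju < m" using ju by simp
    then show False using before[of ju] ju unT mT by force
  qed
  have neq: "L ! m \<noteq> T ! m" using Pm mL by (simp add: P_def)
  have "\<exists>v j. j < length L \<and> L ! j = v \<and> m \<le> j \<and> le v (T ! m)"
  proof (cases "m < k")
    case True
    then have "T ! m \<in> T'" using t'(3) by simp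
    then obtain v where v: "v \<in> interreduction T'" "pp_dvd v (T ! m)"
      using interreduction_below by blast
    obtain j where j: "j < length L" "L ! j = v" using v(1) Lset by (metis in_set_conv_nth)
    have "m \<le> j"
    proof (rule ccontr)
      assume "\<not> m \<le> j"
      then have "j < m" by simp
      then have "v = T ! j" using before j by metis
      then show False using Tnodvd[of j m] v(2) \<open>j < m\<close> mT by simp
    qed
    then show ?thesis using j dvd_le[OF to v(2)] by blast
  next
    case False
    then have mk': "m = k" using mk by simp
    have "m \<le> ju"
    proof (rule ccontr)
      assume "\<not> m \<le> ju"
      then show False using before[of ju] ju unT mT by force
    qed
    then show ?thesis using ju ulk mk' by (metis strict_def)
  qed
  then obtain v j where vj: "j < length L" "L ! j = v" "m \<le> j" "le v (T ! m)" by blast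
  have "le (L ! m) (T ! m)" using Lle[OF vj(3) vj(1)] vj(2,4) ltr by blast
  then have lt: "strict le (L ! m) (T ! m)" using neq by (simp add: strict_def)
  have "tuple_prec le L T"
    unfolding tuple_prec_def using lt mL mT before by (metis min_less_iff_conj)
  moreover have "\<not> proper_prefix T L"
    unfolding proper_prefix_def using neq mT by auto
  ultimately show ?thesis unfolding L_def by blast
qed

end
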